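(* Let $p$ be a prime, $P$ a finite $p$-group, $X$ a set in bijection with $P$, and $G$ the symmetric group on $X$. Regard $P$ as a subgroup of $G$ via the Cayley embedding (the regular permutation representation of $P$ on $X\cong P$). Then the image of ${\rm Res}^G_P\colon H^*(G)\to H^*(P)$ is contained in $I(P,{\cal C}_u)$.
   Context: $H^*(\cdot)$ denotes group cohomology with coefficients in ${\bf F}_p$ (trivial action). ${\cal C}_u={\cal C}_u(P)$ is the category whose objects are the subgroups of $P$ and whose morphisms are all injective group homomorphisms between them. $I(P,{\cal C}_u)$ is the subring of $H^*(P)$ consisting of those $x$ such that for every injective homomorphism $\phi\colon Q\to Q'$ between subgroups of $P$, $\phi^*({\rm Res}^P_{Q'}x)={\rm Res}^P_Q x$ (equivalently, the limit of $H^*$ over ${\cal C}_u$). *)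

theory Defs
  imports "HOL-Algebra.Algebra"
begin

text \<open>Group cohomology H^n(G; F_p) with trivial coefficients, via the standard
 inhomogeneous cochain complex (bar resolution).  An n-cochain is represented by a
 function on lists; only its values on n-tuples of group elements matter, and values
 are read in F_p = Z/pZ, i.e. modulo p.\<close>

definition tuples :: "('g, 'b) monoid_scheme \<Rightarrow> nat \<Rightarrow> 'g list set" where
  "tuples G n = {gs. length gs = n \<and> set gs \<subseteq> carrier G}"

definition coboundary :: "('g, 'b) monoid_scheme \<Rightarrow> nat \<Rightarrow> ('g list \<Rightarrow> int) \<Rightarrow> 'g list \<Rightarrow> int" where
  "coboundary G n f = (\<lambda>gs. f (tl gs)
     + (\<Sum>i<n. (-1) ^ (i + 1) * f (take i gs @ [gs ! i \<otimes>\<^bsub>G\<^esub> gs ! (i + 1)] @ drop (i + 2) gs))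
     + (-1) ^ (n + 1) * f (take n gs))"

definition is_cocycle :: "('g, 'b) monoid_scheme \<Rightarrow> nat \<Rightarrow> nat \<Rightarrow> ('g list \<Rightarrow> int) \<Rightarrow> bool" where
  "is_cocycle G p n f \<longleftrightarrow> (\<forall>gs \<in> tuples G (Suc n). coboundary G n f gs mod int p = 0)"

definition is_coboundary :: "('g, 'b) monoid_scheme \<Rightarrow> nat \<Rightarrow> nat \<Rightarrow> ('g list \<Rightarrow> int) \<Rightarrow> bool" where
  "is_coboundary G p n f \<longleftrightarrow> (case n of
      0 \<Rightarrow> (\<forall>gs \<in> tuples G 0. f gs mod int p = 0)
    | Suc m \<Rightarrow> (\<exists>h. \<forall>gs \<in> tuples G n. (f gs - coboundary G m h gs) mod int p = 0))"

definition cohom_class :: "('g, 'b) monoid_scheme \<Rightarrow> nat \<Rightarrow> nat \<Rightarrow> ('g list \<Rightarrow> int) \<Rightarrow> ('g list \<Rightarrow> int) set" where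
  "cohom_class G p n f = {g. is_cocycle G p n g \<and> is_coboundary G p n (\<lambda>gs. f gs - g gs)}"

definition Hcoh :: "('g, 'b) monoid_scheme \<Rightarrow> nat \<Rightarrow> nat \<Rightarrow> ('g list \<Rightarrow> int) set set" where
  "Hcoh G p n = {cohom_class G p n f | f. is_cocycle G p n f}"

definition induced :: "nat \<Rightarrow> nat \<Rightarrow> ('k, 'c) monoid_scheme \<Rightarrow> ('k \<Rightarrow> 'g) \<Rightarrow> ('g, 'b) monoid_scheme
    \<Rightarrow> ('g list \<Rightarrow> int) set \<Rightarrow> ('k list \<Rightarrow> int) set" where
  "induced p n K h G x = cohom_class K p n
     (\<lambda>ks. (SOME f. is_cocycle G p n f \<and> x = cohom_class G p n f) (map h ks))"

definition Res :: "nat \<Rightarrow> nat \<Rightarrow> ('g, 'b) monoid_scheme \<Rightarrow> 'g set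
    \<Rightarrow> ('g list \<Rightarrow> int) set \<Rightarrow> ('g list \<Rightarrow> int) set" where
  "Res p n P Q x = induced p n (P\<lparr>carrier := Q\<rparr>) id P x"

definition I_Cu :: "('g, 'b) monoid_scheme \<Rightarrow> nat \<Rightarrow> nat \<Rightarrow> ('g list \<Rightarrow> int) set set" where
  "I_Cu P p n = {x \<in> Hcoh P p n. \<forall>Q Q' \<phi>.
      subgroup Q P \<and> subgroup Q' P \<and> \<phi> \<in> hom (P\<lparr>carrier := Q\<rparr>) (P\<lparr>carrier := Q'\<rparr>) \<and> inj_on \<phi> Q
      \<longrightarrow> induced p n (P\<lparr>carrier := Q\<rparr>) \<phi> (P\<lparr>carrier := Q'\<rparr>) (Res p n P Q' x) = Res p n P Q x}"

definition cayley :: "('g, 'b) monoid_scheme \<Rightarrow> ('g \<Rightarrow> 'a) \<Rightarrow> 'a set \<Rightarrow> 'g \<Rightarrow> 'a \<Rightarrow> 'a" where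
  "cayley P e Y g = restrict (\<lambda>y. e (g \<otimes>\<^bsub>P\<^esub> inv_into (carrier P) e y)) Y"

end

theory Submission
  imports Defs
begin

definition dl :: "nat \<Rightarrow> 'a list \<Rightarrow> 'a list" where
  "dl j xs = take j xs @ drop (Suc j) xs"
definition alt :: "('a list \<Rightarrow> int) \<Rightarrow> 'a list \<Rightarrow> int" where
  "alt F xs = (\<Sum>j<length xs. (-1)^j * F (dl j xs))"
definition prism :: "('a \<Rightarrow> 'a) \<Rightarrow> nat \<Rightarrow> 'a list \<Rightarrow> 'a list" where
  "prism r i xs = take (Suc i) xs @ map r (drop i xs)"
definition hop :: "('a \<Rightarrow> 'a) \<Rightarrow> ('a list \<Rightarrow> int) \<Rightarrow> 'a list \<Rightarrow> int" where
  "hop r F xs = (\<Sum>i<length xs. (-1)^i * F (prism r i xs))"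

lemma alt_Nil[simp]: "alt F [] = 0" by (simp add: alt_def)
lemma hop_Nil[simp]: "hop r F [] = 0" by (simp add: hop_def)

lemma alt_Cons: "alt F (a # zs) = F zs - alt (\<lambda>l. F (a # l)) zs"
  unfolding alt_def
  by (simp only: length_Cons sum.lessThan_Suc_shift)
     (simp add: dl_def sum_negf[symmetric])

lemma hop_Cons: "hop r F (a # zs) = F (a # r a # map r zs) - hop r (\<lambda>l. F (a # l)) zs"
  unfolding hop_def
  by (simp only: length_Cons sum.lessThan_Suc_shift)
     (simp add: prism_def sum_negf[symmetric])

lemma alt_diff: "alt (\<lambda>l. F l - G l) xs = alt F xs - alt G xs"
  by (simp add: alt_def sum_subtractf[symmetric] algebra_simps)
lemma hop_diff: "hop r (\<lambda>l. F l - G l) xs = hop r F xs - hop r G xs"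
  by (simp add: hop_def sum_subtractf[symmetric] algebra_simps)
lemma alt_map: "alt F (map r xs) = alt (\<lambda>l. F (map r l)) xs"
  by (simp add: alt_def dl_def take_map drop_map map_append[symmetric] del: map_append)

lemma homotopy: "alt (hop r F) ys + hop r (alt F) ys = F (map r ys) - F ys"
proof (induction ys arbitrary: F)
  case Nil then show ?case by simp
next
  case (Cons a zs)
  have e1: "alt (hop r F) (a # zs) = hop r F zs - alt (\<lambda>l. F (a # r a # map r l)) zs
      + alt (hop r (\<lambda>l. F (a # l))) zs"
    by (simp add: alt_Cons hop_Cons alt_diff)
  have e2: "hop r (alt F) (a # zs) = F (r a # map r zs) - F (a # map r zs)
       + alt (\<lambda>l. F (a # r a # l)) (map r zs) - hop r F zs + hop r (alt (\<lambda>l. F (a # l))) zs"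
    by (simp add: alt_Cons hop_Cons hop_diff)
  show ?case using Cons.IH[of "\<lambda>l. F (a # l)"] e1 e2 by (simp add: alt_map)
qed


lemma cob_add: "coboundary G m (\<lambda>l. h1 l + h2 l) gs = coboundary G m h1 gs + coboundary G m h2 gs"
  unfolding coboundary_def by (simp only: distrib_left sum.distrib)
lemma cob_neg: "coboundary G m (\<lambda>l. - h1 l) gs = - coboundary G m h1 gs"
  unfolding coboundary_def by (simp only: mult_minus_right sum_negf)
lemma cob_zero: "coboundary G m (\<lambda>l. 0) gs = 0"
  by (simp add: coboundary_def)

lemma B_cong:
  assumes "is_coboundary K p n u" "\<forall>gs\<in>tuples K n. (u gs - v gs) mod int p = 0"
  shows "is_coboundary K p n v"
proof (cases n)
  case 0 then show ?thesis using assms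
  proof -
    have "\<forall>gs\<in>tuples K 0. v gs mod int p = 0"
    proof
      fix gs assume gs: "gs \<in> tuples K 0"
      have a1: "int p dvd u gs" using assms(1) gs 0 by (simp add: is_coboundary_def mod_eq_0_iff_dvd)
      have a2: "int p dvd u gs - v gs" using assms(2) gs 0 by (simp add: mod_eq_0_iff_dvd)
      have "int p dvd u gs - (u gs - v gs)" using a1 a2 by (rule dvd_diff)
      then show "v gs mod int p = 0" by (simp add: mod_eq_0_iff_dvd)
    qed
    then show ?thesis using 0 by (simp add: is_coboundary_def)
  qed
next
  case (Suc m)
  then obtain h where h: "\<forall>gs \<in> tuples K n. (u gs - coboundary K m h gs) mod int p = 0"
    using assms(1) by (auto simp: is_coboundary_def)
  have "\<forall>gs \<in> tuples K n. (v gs - coboundary K m h gs) mod int p = 0"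
  proof
    fix gs assume gs: "gs \<in> tuples K n"
    have a: "int p dvd (u gs - coboundary K m h gs)" using h gs by (simp add: mod_eq_0_iff_dvd)
    have b: "int p dvd (u gs - v gs)" using assms(2) gs by (simp add: mod_eq_0_iff_dvd)
    have "int p dvd (u gs - coboundary K m h gs) - (u gs - v gs)" using a b by (rule dvd_diff)
    moreover have "(u gs - coboundary K m h gs) - (u gs - v gs) = v gs - coboundary K m h gs" by simp
    ultimately show "(v gs - coboundary K m h gs) mod int p = 0"
      by (simp add: mod_eq_0_iff_dvd)
  qed
  then show ?thesis using Suc by (auto simp: is_coboundary_def)
qed

lemma B_zero:
  assumes "\<forall>gs\<in>tuples K n. u gs mod int p = 0"
  shows "is_coboundary K p n u"
proof (cases n)
  case 0 then show ?thesis using assms by (simp add: is_coboundary_def)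
next
  case (Suc m)
  then show ?thesis using assms
    by (auto simp: is_coboundary_def intro!: exI[of _ "\<lambda>l. 0"] simp: cob_zero)
qed

lemma B_add:
  assumes "is_coboundary K p n u" "is_coboundary K p n v"
  shows "is_coboundary K p n (\<lambda>gs. u gs + v gs)"
proof (cases n)
  case 0 then show ?thesis using assms
    by (auto simp: is_coboundary_def mod_eq_0_iff_dvd)
next
  case (Suc m)
  then obtain h1 h2 where h1: "\<forall>gs \<in> tuples K n. (u gs - coboundary K m h1 gs) mod int p = 0"
    and h2: "\<forall>gs \<in> tuples K n. (v gs - coboundary K m h2 gs) mod int p = 0"
    using assms by (auto simp: is_coboundary_def)
  have "\<forall>gs \<in> tuples K n. (u gs + v gs - coboundary K m (\<lambda>l. h1 l + h2 l) gs) mod int p = 0"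
  proof
    fix gs assume gs: "gs \<in> tuples K n"
    have "int p dvd (u gs - coboundary K m h1 gs) + (v gs - coboundary K m h2 gs)"
      using h1 h2 gs by (simp add: mod_eq_0_iff_dvd)
    then show "(u gs + v gs - coboundary K m (\<lambda>l. h1 l + h2 l) gs) mod int p = 0"
      by (simp add: mod_eq_0_iff_dvd cob_add algebra_simps)
  qed
  then show ?thesis using Suc by (auto simp: is_coboundary_def)
qed

lemma B_neg:
  assumes "is_coboundary K p n u"
  shows "is_coboundary K p n (\<lambda>gs. - u gs)"
proof (cases n)
  case 0 then show ?thesis using assms
    by (auto simp: is_coboundary_def mod_eq_0_iff_dvd)
next
  case (Suc m)
  then obtain h1 where h1: "\<forall>gs \<in> tuples K n. (u gs - coboundary K m h1 gs) mod int p = 0"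
    using assms by (auto simp: is_coboundary_def)
  have "\<forall>gs \<in> tuples K n. (- u gs - coboundary K m (\<lambda>l. - h1 l) gs) mod int p = 0"
  proof
    fix gs assume gs: "gs \<in> tuples K n"
    have "int p dvd (u gs - coboundary K m h1 gs)"
      using h1 gs by (simp add: mod_eq_0_iff_dvd)
    then have d: "int p dvd - (u gs - coboundary K m h1 gs)" by (simp only: dvd_minus_iff)
    have eq: "- u gs - coboundary K m (\<lambda>l. - h1 l) gs = - (u gs - coboundary K m h1 gs)"
      by (simp add: cob_neg)
    show "(- u gs - coboundary K m (\<lambda>l. - h1 l) gs) mod int p = 0"
      using d eq by (simp only: mod_eq_0_iff_dvd)
  qed
  then show ?thesis using Suc by (auto simp: is_coboundary_def)
qed

lemma class_eq:
  assumes "is_coboundary K p n (\<lambda>gs. a gs - b gs)"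
  shows "cohom_class K p n a = cohom_class K p n b"
proof -
  have neg: "is_coboundary K p n (\<lambda>gs. b gs - a gs)"
    using B_neg[OF assms] by simp
  have "is_coboundary K p n (\<lambda>gs. a gs - g gs) \<longleftrightarrow> is_coboundary K p n (\<lambda>gs. b gs - g gs)" for g
  proof
    assume "is_coboundary K p n (\<lambda>gs. a gs - g gs)"
    from B_add[OF neg this] show "is_coboundary K p n (\<lambda>gs. b gs - g gs)" by simp
  next
    assume "is_coboundary K p n (\<lambda>gs. b gs - g gs)"
    from B_add[OF assms this] show "is_coboundary K p n (\<lambda>gs. a gs - g gs)" by simp
  qed
  then show ?thesis by (simp add: cohom_class_def)
qed

lemma self_in_class: "is_cocycle K p n f \<Longrightarrow> f \<in> cohom_class K p n f"
  by (auto simp: cohom_class_def intro!: B_zero)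

lemma cob_pull:
  assumes "gs \<in> tuples K (Suc n)"
    and hom: "\<And>x y. x \<in> carrier K \<Longrightarrow> y \<in> carrier K \<Longrightarrow> h (x \<otimes>\<^bsub>K\<^esub> y) = h x \<otimes>\<^bsub>G\<^esub> h y"
  shows "coboundary K n (\<lambda>ks. u (map h ks)) gs = coboundary G n u (map h gs)"
proof -
  have len: "length gs = Suc n" and car: "set gs \<subseteq> carrier K" using assms(1) by (auto simp: tuples_def)
  have "map h (take i gs @ [gs ! i \<otimes>\<^bsub>K\<^esub> gs ! (i + 1)] @ drop (i + 2) gs)
      = take i (map h gs) @ [map h gs ! i \<otimes>\<^bsub>G\<^esub> map h gs ! (i + 1)] @ drop (i + 2) (map h gs)"
    if "i < n" for i
  proof -
    have "gs ! i \<in> carrier K" "gs ! (i+1) \<in> carrier K" using car len that by auto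
    then show ?thesis using len that by (simp add: take_map drop_map hom)
  qed
  then show ?thesis unfolding coboundary_def
    by (simp add: map_tl take_map)
qed

lemma tuples_map:
  assumes "gs \<in> tuples K n" "\<And>x. x \<in> carrier K \<Longrightarrow> h x \<in> carrier G"
  shows "map h gs \<in> tuples G n"
  using assms by (auto simp: tuples_def)

lemma cocycle_pull:
  assumes "is_cocycle G p n u"
    and car: "\<And>x. x \<in> carrier K \<Longrightarrow> h x \<in> carrier G"
    and hom: "\<And>x y. x \<in> carrier K \<Longrightarrow> y \<in> carrier K \<Longrightarrow> h (x \<otimes>\<^bsub>K\<^esub> y) = h x \<otimes>\<^bsub>G\<^esub> h y"
  shows "is_cocycle K p n (\<lambda>ks. u (map h ks))"
  using assms unfolding is_cocycle_def
  by (auto simp: cob_pull[OF _ hom] tuples_map[OF _ car])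

lemma B_pull:
  assumes "is_coboundary G p n u"
    and car: "\<And>x. x \<in> carrier K \<Longrightarrow> h x \<in> carrier G"
    and hom: "\<And>x y. x \<in> carrier K \<Longrightarrow> y \<in> carrier K \<Longrightarrow> h (x \<otimes>\<^bsub>K\<^esub> y) = h x \<otimes>\<^bsub>G\<^esub> h y"
  shows "is_coboundary K p n (\<lambda>ks. u (map h ks))"
proof (cases n)
  case 0 then show ?thesis using assms(1) by (simp add: is_coboundary_def tuples_def)
next
  case (Suc m)
  then obtain h' where h': "\<forall>gs \<in> tuples G n. (u gs - coboundary G m h' gs) mod int p = 0"
    using assms(1) by (auto simp: is_coboundary_def)
  have "\<forall>gs \<in> tuples K n. (u (map h gs) - coboundary K m (\<lambda>ks. h' (map h ks)) gs) mod int p = 0"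
    using h' Suc by (auto simp: cob_pull[OF _ hom] tuples_map[OF _ car])
  then show ?thesis using Suc by (auto simp: is_coboundary_def)
qed

lemma induced_class:
  assumes "is_cocycle G p n f0"
    and car: "\<And>x. x \<in> carrier K \<Longrightarrow> h x \<in> carrier G"
    and hom: "\<And>x y. x \<in> carrier K \<Longrightarrow> y \<in> carrier K \<Longrightarrow> h (x \<otimes>\<^bsub>K\<^esub> y) = h x \<otimes>\<^bsub>G\<^esub> h y"
  shows "induced p n K h G (cohom_class G p n f0) = cohom_class K p n (\<lambda>ks. f0 (map h ks))"
proof -
  define f where "f = (SOME f. is_cocycle G p n f \<and> cohom_class G p n f0 = cohom_class G p n f)"
  have "is_cocycle G p n f \<and> cohom_class G p n f0 = cohom_class G p n f"
    unfolding f_def by (rule someI[of _ f0]) (simp add: assms(1))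
  then have fc: "is_cocycle G p n f" and eq: "cohom_class G p n f0 = cohom_class G p n f" by auto
  have "f0 \<in> cohom_class G p n f" using eq self_in_class[OF assms(1)] by simp
  then have "is_coboundary G p n (\<lambda>gs. f gs - f0 gs)" by (simp add: cohom_class_def)
  from B_pull[OF this car hom]
  have "is_coboundary K p n (\<lambda>ks. f (map h ks) - f0 (map h ks))" .
  then have "cohom_class K p n (\<lambda>ks. f (map h ks)) = cohom_class K p n (\<lambda>ks. f0 (map h ks))"
    by (rule class_eq)
  then show ?thesis unfolding induced_def f_def[symmetric] by simp
qed


fun quot :: "('g, 'b) monoid_scheme \<Rightarrow> 'g list \<Rightarrow> 'g list" where
  "quot G (x # y # zs) = (inv\<^bsub>G\<^esub> x \<otimes>\<^bsub>G\<^esub> y) # quot G (y # zs)"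
| "quot G _ = []"

fun pp :: "('g, 'b) monoid_scheme \<Rightarrow> 'g \<Rightarrow> 'g list \<Rightarrow> 'g list" where
  "pp G x [] = [x]"
| "pp G x (g # gs) = x # pp G (x \<otimes>\<^bsub>G\<^esub> g) gs"

context group begin

lemma quot_length: "length (quot G xs) = length xs - 1"
  by (induction xs rule: induct_list012) auto

lemma quot_carrier: "set xs \<subseteq> carrier G \<Longrightarrow> set (quot G xs) \<subseteq> carrier G"
  by (induction xs rule: induct_list012) auto

lemma quot_tl: "quot G (tl xs) = tl (quot G xs)"
  by (induction xs rule: induct_list012) auto

lemma quot_take: "quot G (take (Suc k) xs) = take k (quot G xs)"
proof (induction xs arbitrary: k)
  case Nil then show ?case by simp
next
  case (Cons a xs)
  show ?case
  proof (cases xs)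
    case Nil then show ?thesis by simp
  next
    case (Cons b ys)
    show ?thesis
    proof (cases k)
      case 0 then show ?thesis by simp
    next
      case (Suc k')
      have "quot G (take (Suc k) (a # xs)) = quot G (a # take (Suc k') xs)" using Suc by simp
      also have "\<dots> = (inv a \<otimes> b) # quot G (take (Suc k') xs)" using Cons by simp
      also have "\<dots> = (inv a \<otimes> b) # take k' (quot G xs)" using Cons.IH by simp
      finally show ?thesis using Cons Suc by simp
    qed
  qed
qed

lemma quot_mid:
  assumes "Suc (Suc i) < length xs" "set xs \<subseteq> carrier G"
  shows "quot G (dl (Suc i) xs) = take i (quot G xs) @ [quot G xs ! i \<otimes> quot G xs ! Suc i]
          @ drop (Suc (Suc i)) (quot G xs)"
  using assms
proof (induction i arbitrary: xs)
  case 0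
  then obtain a b c zs where xs: "xs = a # b # c # zs"
    by (metis Suc_less_eq length_Suc_conv less_Suc0 less_imp_Suc_add not_less0 list.exhaust Suc_lessE)
  have abc: "a \<in> carrier G" "b \<in> carrier G" "c \<in> carrier G" using 0 xs by auto
  have "(inv a \<otimes> b) \<otimes> (inv b \<otimes> c) = inv a \<otimes> c"
    using abc by (simp add: m_assoc[symmetric]) (simp add: m_assoc)
  then show ?case using xs by (simp add: dl_def)
next
  case (Suc i)
  then obtain a b zs where xs: "xs = a # b # zs"
    by (metis Suc_less_eq length_Suc_conv less_imp_Suc_add)
  have ih: "quot G (dl (Suc i) (b # zs)) = take i (quot G (b # zs)) @ [quot G (b # zs) ! i \<otimes> quot G (b # zs) ! Suc i]
          @ drop (Suc (Suc i)) (quot G (b # zs))"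
    using Suc xs by (intro Suc.IH) auto
  have "dl (Suc (Suc i)) xs = a # dl (Suc i) (b # zs)" using xs by (simp add: dl_def)
  moreover have "dl (Suc i) (b # zs) = b # dl i zs" by (simp add: dl_def)
  ultimately have "quot G (dl (Suc (Suc i)) xs) = (inv a \<otimes> b) # quot G (dl (Suc i) (b # zs))" by simp
  then show ?case using ih xs by simp
qed

lemma cob_quot:
  assumes "length xs = Suc (Suc n)" "set xs \<subseteq> carrier G"
  shows "coboundary G n f (quot G xs) = alt (\<lambda>l. f (quot G l)) xs"
proof -
  have lq: "length (quot G xs) = Suc n" using assms quot_length by simp
  have "alt (\<lambda>l. f (quot G l)) xs = (\<Sum>j<Suc (Suc n). (-1)^j * f (quot G (dl j xs)))"
    using assms by (simp add: alt_def)
  also have "\<dots> = f (quot G (dl 0 xs)) + (\<Sum>i<n. (-1)^(Suc i) * f (quot G (dl (Suc i) xs)))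
        + (-1)^(Suc n) * f (quot G (dl (Suc n) xs))"
    apply (subst sum.lessThan_Suc)
    apply (subst sum.lessThan_Suc_shift)
    apply simp
    done
  also have "\<dots> = coboundary G n f (quot G xs)"
  proof -
    have "dl 0 xs = tl xs" by (simp add: dl_def drop_Suc)
    then have 1: "quot G (dl 0 xs) = tl (quot G xs)" by (simp add: quot_tl)
    have "dl (Suc n) xs = take (Suc n) xs" using assms by (simp add: dl_def)
    then have 2: "quot G (dl (Suc n) xs) = take n (quot G xs)" by (simp add: quot_take)
    have 3: "quot G (dl (Suc i) xs) = take i (quot G xs) @ [quot G xs ! i \<otimes> quot G xs ! (i + 1)]
          @ drop (i + 2) (quot G xs)" if "i < n" for i
      using quot_mid[of i xs] assms that by simp
    show ?thesis unfolding coboundary_def using 1 2 3 by simp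
  qed
  finally show ?thesis by simp
qed

lemma pp_props: "x \<in> carrier G \<Longrightarrow> set gs \<subseteq> carrier G \<Longrightarrow>
   length (pp G x gs) = Suc (length gs) \<and> set (pp G x gs) \<subseteq> carrier G \<and> hd (pp G x gs) = x
   \<and> quot G (pp G x gs) = gs"
proof (induction gs arbitrary: x)
  case Nil then show ?case by simp
next
  case (Cons g gs)
  have "x \<otimes> g \<in> carrier G" using Cons by auto
  with Cons.IH[of "x \<otimes> g"] Cons.prems obtain l where l: "pp G (x \<otimes> g) gs = (x \<otimes> g) # l"
    and p: "length (pp G (x \<otimes> g) gs) = Suc (length gs)" "set (pp G (x \<otimes> g) gs) \<subseteq> carrier G"
       "quot G (pp G (x \<otimes> g) gs) = gs"
    by (cases "pp G (x \<otimes> g) gs") auto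
  have "inv x \<otimes> (x \<otimes> g) = g" using Cons.prems by (simp add: m_assoc[symmetric])
  then show ?case using Cons.prems p l by simp
qed

lemma quot_lmult: "a \<in> carrier G \<Longrightarrow> set xs \<subseteq> carrier G \<Longrightarrow> quot G (map ((\<otimes>) a) xs) = quot G xs"
proof (induction xs rule: induct_list012)
  case (3 x y zs)
  then show ?case by (simp add: inv_mult_group m_assoc[symmetric]) (simp add: m_assoc)
qed auto

lemma quot_rmult: "t \<in> carrier G \<Longrightarrow> set xs \<subseteq> carrier G \<Longrightarrow>
    quot G (map (\<lambda>x. x \<otimes> t) xs) = map (\<lambda>g. inv t \<otimes> g \<otimes> t) (quot G xs)"
proof (induction xs rule: induct_list012)
  case (3 x y zs)
  then show ?case by (simp add: inv_mult_group m_assoc)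
qed auto

lemma pp_quot: "x \<in> carrier G \<Longrightarrow> set zs \<subseteq> carrier G \<Longrightarrow> pp G x (quot G (x # zs)) = x # zs"
proof (induction zs arbitrary: x)
  case Nil then show ?case by simp
next
  case (Cons y zs)
  have "x \<otimes> (inv x \<otimes> y) = y" using Cons.prems by (simp add: m_assoc[symmetric])
  then show ?case using Cons by simp
qed

lemma pp_quot1: "xs \<noteq> [] \<Longrightarrow> set xs \<subseteq> carrier G \<Longrightarrow> pp G \<one> (quot G xs) = map ((\<otimes>) (inv (hd xs))) xs"
proof -
  assume ne: "xs \<noteq> []" and c: "set xs \<subseteq> carrier G"
  then obtain x zs where xs: "xs = x # zs" by (cases xs) auto
  have x: "x \<in> carrier G" using c xs by auto
  have "quot G xs = quot G (map ((\<otimes>) (inv x)) xs)" using quot_lmult[of "inv x" xs] x c by simp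
  also have "\<dots> = quot G (\<one> # map ((\<otimes>) (inv x)) zs)" using xs x by simp
  finally have "pp G \<one> (quot G xs) = \<one> # map ((\<otimes>) (inv x)) zs"
    using pp_quot[of \<one> "map ((\<otimes>) (inv x)) zs"] c xs x by auto
  then show ?thesis using xs x by simp
qed


lemma prism_props:
  assumes "i < length xs" "set xs \<subseteq> carrier G" "t \<in> carrier G"
  shows "length (prism (\<lambda>x. x \<otimes> t) i xs) = Suc (length xs)"
    "set (prism (\<lambda>x. x \<otimes> t) i xs) \<subseteq> carrier G"
  using assms by (auto simp: prism_def dest: in_set_takeD in_set_dropD)

lemma hop_linv:
  assumes "a \<in> carrier G" "set ys \<subseteq> carrier G" "t \<in> carrier G"
  shows "hop (\<lambda>x. x \<otimes> t) (\<lambda>l. f (quot G l)) (map ((\<otimes>) a) ys) = hop (\<lambda>x. x \<otimes> t) (\<lambda>l. f (quot G l)) ys"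
  unfolding hop_def
proof (rule sum.cong)
  fix i assume "i \<in> {..<length ys}"
  then have i: "i < length ys" by simp
  have "prism (\<lambda>x. x \<otimes> t) i (map ((\<otimes>) a) ys) = map ((\<otimes>) a) (prism (\<lambda>x. x \<otimes> t) i ys)"
  proof -
    have "map (\<lambda>x. x \<otimes> t) (map ((\<otimes>) a) (drop i ys)) = map ((\<otimes>) a) (map (\<lambda>x. x \<otimes> t) (drop i ys))"
      using assms by (auto simp: m_assoc dest: in_set_dropD)
    then show ?thesis by (simp add: prism_def take_map drop_map)
  qed
  then show "(- 1) ^ i * f (quot G (prism (\<lambda>x. x \<otimes> t) i (map ((\<otimes>) a) ys))) =
         (- 1) ^ i * f (quot G (prism (\<lambda>x. x \<otimes> t) i ys))"
    using quot_lmult[OF assms(1) prism_props(2)[OF i assms(2,3)]] by simp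
qed simp

lemma conj_B:
  assumes coc: "is_cocycle G p n f" and t: "t \<in> carrier G"
  shows "is_coboundary G p n (\<lambda>gs. f (map (\<lambda>g. inv t \<otimes> g \<otimes> t) gs) - f gs)"
proof (cases n)
  case 0 then show ?thesis by (intro B_zero) (simp add: tuples_def)
next
  case (Suc m)
  define r where "r = (\<lambda>x. x \<otimes> t)"
  define F where "F = (\<lambda>l. f (quot G l))"
  define h' where "h' = (\<lambda>gs. hop r F (pp G \<one> gs))"
  have "(f (map (\<lambda>g. inv t \<otimes> g \<otimes> t) gs) - f gs - coboundary G m h' gs) mod int p = 0"
    if gs: "gs \<in> tuples G n" for gs
  proof -
    have gsc: "set gs \<subseteq> carrier G" and gsl: "length gs = Suc m" using gs Suc by (auto simp: tuples_def)
    define xs where "xs = pp G \<one> gs"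
    have xl: "length xs = Suc (Suc m)" and xc: "set xs \<subseteq> carrier G" and qx: "quot G xs = gs"
      using pp_props[OF one_closed gsc] gsl by (auto simp: xs_def)
    have "coboundary G m h' gs = alt (\<lambda>l. h' (quot G l)) xs"
      using cob_quot[OF xl xc] qx by simp
    also have "\<dots> = alt (hop r F) xs"
      unfolding alt_def
    proof (rule sum.cong)
      fix j assume "j \<in> {..<length xs}"
      define ys where "ys = dl j xs"
      have yc: "set ys \<subseteq> carrier G" using xc by (auto simp: ys_def dl_def dest: in_set_takeD in_set_dropD)
      have "length ys = Suc m" using xl \<open>j \<in> {..<length xs}\<close> by (simp add: ys_def dl_def)
      then have yne: "ys \<noteq> []" by auto
      have hy: "hd ys \<in> carrier G" using yne yc by (cases ys) auto
      have "h' (quot G ys) = hop r F (map ((\<otimes>) (inv (hd ys))) ys)"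
        using pp_quot1[OF yne yc] by (simp add: h'_def)
      also have "\<dots> = hop r F ys" unfolding r_def F_def using hop_linv[OF inv_closed[OF hy] yc t] .
      finally show "(- 1) ^ j * h' (quot G (dl j xs)) = (- 1) ^ j * hop r F (dl j xs)"
        by (simp add: ys_def)
    qed simp
    also have "\<dots> = F (map r xs) - F xs - hop r (alt F) xs"
      using homotopy[of r F xs] by simp
    also have "F (map r xs) = f (map (\<lambda>g. inv t \<otimes> g \<otimes> t) gs)"
      unfolding F_def r_def using quot_rmult[OF t xc] qx by simp
    also have "F xs = f gs" using qx by (simp add: F_def)
    finally have eq: "f (map (\<lambda>g. inv t \<otimes> g \<otimes> t) gs) - f gs - coboundary G m h' gs = hop r (alt F) xs"
      by simp
    have "int p dvd hop r (alt F) xs"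
      unfolding hop_def
    proof (rule dvd_sum)
      fix i assume "i \<in> {..<length xs}"
      then have i: "i < length xs" by simp
      let ?z = "prism r i xs"
      have zl: "length ?z = Suc (Suc (Suc m))" and zc: "set ?z \<subseteq> carrier G"
        using prism_props[OF i xc t] xl by (auto simp: r_def)
      have "alt F ?z = coboundary G (Suc m) f (quot G ?z)"
        using cob_quot[OF zl zc] by (simp add: F_def)
      moreover have "quot G ?z \<in> tuples G (Suc n)"
        using quot_length[of ?z] quot_carrier[OF zc] zl Suc by (simp add: tuples_def)
      ultimately have "int p dvd alt F ?z"
        using coc Suc by (auto simp: is_cocycle_def mod_eq_0_iff_dvd)
      then show "int p dvd (- 1) ^ i * alt F ?z" by simp
    qed
    then show ?thesis using eq by (simp add: mod_eq_0_iff_dvd)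
  qed
  then show ?thesis using Suc by (auto simp: is_coboundary_def)
qed

end

context group begin

lemma equiv_perm:
  assumes fin: "finite (carrier G)" and Q: "subgroup Q G" and R: "subgroup (\<phi> ` Q) G"
    and phm: "\<forall>x\<in>Q. \<forall>y\<in>Q. \<phi> (x \<otimes> y) = \<phi> x \<otimes> \<phi> y" and inj: "inj_on \<phi> Q"
  shows "\<exists>\<psi>. bij_betw \<psi> (carrier G) (carrier G) \<and> (\<forall>q\<in>Q. \<forall>x\<in>carrier G. \<psi> (q \<otimes> x) = \<phi> q \<otimes> \<psi> x)"
proof -
  let ?R = "\<phi> ` Q"
  have Qs: "Q \<subseteq> carrier G" and Rs: "?R \<subseteq> carrier G" using Q R subgroup.subset by auto
  have finQ: "finite Q" using fin Qs finite_subset by auto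
  have cQ: "card Q > 0" using finQ subgroup.one_closed[OF Q] card_gt_0_iff by auto
  have cR: "card ?R = card Q" using card_image[OF inj] .
  have l1: "card (rcosets Q) * card Q = order G" using lagrange[OF Q] .
  have l2: "card (rcosets ?R) * card Q = order G" using lagrange[OF R] cR by simp
  have "card (rcosets Q) * card Q = card (rcosets ?R) * card Q" using l1 l2 by simp
  then have ceq: "card (rcosets Q) = card (rcosets ?R)" using cQ by simp
  have f1: "finite (rcosets Q)" using rcosets_subset_PowG[OF Q] fin finite_subset by blast
  have f2: "finite (rcosets ?R)" using rcosets_subset_PowG[OF R] fin finite_subset by blast
  obtain \<beta> where \<beta>: "bij_betw \<beta> (rcosets Q) (rcosets ?R)" using finite_same_card_bij[OF f1 f2 ceq] by blast
  define rep :: "'a set \<Rightarrow> 'a" where "rep C = (SOME x. x \<in> C)" for C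
  define \<psi> where "\<psi> x = \<phi> (x \<otimes> inv (rep (Q #> x))) \<otimes> rep (\<beta> (Q #> x))" for x
  have repQ: "rep (Q #> x) \<in> Q #> x" if "x \<in> carrier G" for x
    unfolding rep_def using rcos_self[OF that Q] by (rule someI)
  have uQ: "x \<otimes> inv (rep (Q #> x)) \<in> Q" if x: "x \<in> carrier G" for x
  proof -
    obtain h where h: "h \<in> Q" "rep (Q #> x) = h \<otimes> x" using repQ[OF x] unfolding r_coset_def by auto
    have hc: "h \<in> carrier G" using h Qs by auto
    have "x \<otimes> inv (h \<otimes> x) = inv h" using hc x by (simp add: inv_mult_group m_assoc[symmetric])
    then show ?thesis using h subgroup.m_inv_closed[OF Q] by simp
  qed
  have Dfacts: "rep (\<beta> (Q #> x)) \<in> carrier G \<and> ?R #> rep (\<beta> (Q #> x)) = \<beta> (Q #> x)"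
    if x: "x \<in> carrier G" for x
  proof -
    have "Q #> x \<in> rcosets Q" using rcosetsI[OF Qs x] .
    then have "\<beta> (Q #> x) \<in> rcosets ?R" by (rule bij_betw_apply[OF \<beta>])
    then obtain y where y: "y \<in> carrier G" "\<beta> (Q #> x) = ?R #> y" unfolding RCOSETS_def by blast
    have m: "rep (?R #> y) \<in> ?R #> y" unfolding rep_def using rcos_self[OF y(1) R] by (rule someI)
    then have c: "rep (?R #> y) \<in> carrier G" using r_coset_subset_G[OF Rs y(1)] by blast
    have e: "?R #> rep (?R #> y) = ?R #> y" by (rule repr_independence[OF m y(1) R, symmetric])
    show ?thesis unfolding y(2) using c e by blast
  qed
  have psi_in: "\<psi> x \<in> \<beta> (Q #> x)" and psic: "\<psi> x \<in> carrier G" if x: "x \<in> carrier G" for x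
  proof -
    let ?d = "rep (\<beta> (Q #> x))"
    have d: "?d \<in> carrier G" "?R #> ?d = \<beta> (Q #> x)" using Dfacts[OF x] by blast+
    have pu: "\<phi> (x \<otimes> inv (rep (Q #> x))) \<in> ?R" using uQ[OF x] by blast
    have "\<phi> (x \<otimes> inv (rep (Q #> x))) \<otimes> ?d \<in> ?R #> ?d" by (rule rcosI[OF pu Rs d(1)])
    then show "\<psi> x \<in> \<beta> (Q #> x)" unfolding \<psi>_def using d(2) by simp
    have "\<phi> (x \<otimes> inv (rep (Q #> x))) \<in> carrier G" using pu Rs by blast
    then show "\<psi> x \<in> carrier G" unfolding \<psi>_def using d(1) by simp
  qed
  have equi: "\<psi> (q \<otimes> x) = \<phi> q \<otimes> \<psi> x" if q: "q \<in> Q" and x: "x \<in> carrier G" for q x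
  proof -
    have qc: "q \<in> carrier G" using q Qs by auto
    have "q \<otimes> x \<in> Q #> x" using rcosI[OF q Qs x] .
    then have co: "Q #> (q \<otimes> x) = Q #> x" using repr_independence[OF _ x Q] by metis
    let ?r = "rep (Q #> x)"
    have rc: "?r \<in> carrier G" using repQ[OF x] r_coset_subset_G[OF Qs x] by auto
    have "q \<otimes> x \<otimes> inv ?r = q \<otimes> (x \<otimes> inv ?r)" using qc x rc by (simp add: m_assoc)
    then have "\<phi> (q \<otimes> x \<otimes> inv ?r) = \<phi> q \<otimes> \<phi> (x \<otimes> inv ?r)" using phm q uQ[OF x] by simp
    moreover have "\<phi> q \<in> carrier G" "\<phi> (x \<otimes> inv ?r) \<in> carrier G" using q uQ[OF x] Rs by auto
    ultimately show ?thesis unfolding \<psi>_def using co Dfacts[OF x] by (simp add: m_assoc)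
  qed
  have injpsi: "inj_on \<psi> (carrier G)"
  proof (rule inj_onI)
    fix x y assume x: "x \<in> carrier G" and y: "y \<in> carrier G" and e: "\<psi> x = \<psi> y"
    have bx: "\<beta> (Q #> x) \<in> rcosets ?R" by (rule bij_betw_apply[OF \<beta> rcosetsI[OF Qs x]])
    have by': "\<beta> (Q #> y) \<in> rcosets ?R" by (rule bij_betw_apply[OF \<beta> rcosetsI[OF Qs y]])
    have "\<beta> (Q #> x) = \<beta> (Q #> y)"
    proof (rule ccontr)
      assume "\<beta> (Q #> x) \<noteq> \<beta> (Q #> y)"
      then have "disjnt (\<beta> (Q #> x)) (\<beta> (Q #> y))"
        using rcos_disjoint[OF R] bx by' unfolding pairwise_def by blast
      then show False using psi_in[OF x] psi_in[OF y] e unfolding disjnt_def by auto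
    qed
    then have co: "Q #> x = Q #> y"
      by (rule inj_onD[OF bij_betw_imp_inj_on[OF \<beta>] _ rcosetsI[OF Qs x] rcosetsI[OF Qs y]])
    let ?r = "rep (Q #> x)" and ?d = "rep (\<beta> (Q #> x))"
    have rc: "?r \<in> carrier G" using repQ[OF x] r_coset_subset_G[OF Qs x] by auto
    have eq1: "\<phi> (x \<otimes> inv ?r) \<otimes> ?d = \<phi> (y \<otimes> inv ?r) \<otimes> ?d" using e co unfolding \<psi>_def by simp
    have c1: "\<phi> (x \<otimes> inv ?r) \<in> carrier G" using uQ[OF x] Rs by blast
    have c2: "\<phi> (y \<otimes> inv ?r) \<in> carrier G" using uQ[OF y] co Rs by auto
    have c3: "?d \<in> carrier G" using Dfacts[OF x] by blast
    have "\<phi> (x \<otimes> inv ?r) = \<phi> (y \<otimes> inv ?r)" by (rule r_cancel[OF eq1 c1 c2 c3])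
    then have "x \<otimes> inv ?r = y \<otimes> inv ?r" using inj uQ[OF x] uQ[OF y] co unfolding inj_on_def by auto
    then show "x = y" by (rule r_cancel) (use x y rc in simp_all)
  qed
  have "\<psi> ` carrier G = carrier G" using endo_inj_surj[OF fin _ injpsi] psic by auto
  then have "bij_betw \<psi> (carrier G) (carrier G)" using injpsi by (simp add: bij_betw_def)
  then show ?thesis using equi by blast
qed

end

lemma cay_app:
  assumes "bij_betw e (carrier P) S" "x \<in> carrier P"
  shows "cayley P e S g (e x) = e (g \<otimes>\<^bsub>P\<^esub> x)"
proof -
  have "e x \<in> S" by (rule bij_betw_apply[OF assms])
  moreover have "inv_into (carrier P) e (e x) = x"
    by (rule inv_into_f_f[OF bij_betw_imp_inj_on[OF assms(1)] assms(2)])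
  ultimately show ?thesis by (simp add: cayley_def)
qed

lemma cay_Bij:
  assumes gr: "group P" and e: "bij_betw e (carrier P) S" and g: "g \<in> carrier P"
  shows "cayley P e S g \<in> Bij S"
proof -
  interpret group P by fact
  have ext: "cayley P e S g \<in> extensional S" by (simp add: cayley_def)
  have Se: "S = e ` carrier P" using e by (simp add: bij_betw_def)
  have inj: "inj_on e (carrier P)" using e by (simp add: bij_betw_def)
  have "inj_on (cayley P e S g) S"
  proof (rule inj_onI)
    fix s1 s2 assume "s1 \<in> S" "s2 \<in> S" and eq: "cayley P e S g s1 = cayley P e S g s2"
    then obtain x1 x2 where x: "x1 \<in> carrier P" "x2 \<in> carrier P" "s1 = e x1" "s2 = e x2" using Se by auto
    have "e (g \<otimes>\<^bsub>P\<^esub> x1) = e (g \<otimes>\<^bsub>P\<^esub> x2)" using eq x cay_app[OF e] by simp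
    then have "g \<otimes>\<^bsub>P\<^esub> x1 = g \<otimes>\<^bsub>P\<^esub> x2" using inj x g by (auto dest: inj_onD)
    then show "s1 = s2" using x g by simp
  qed
  moreover have "cayley P e S g ` S = S"
  proof
    show "cayley P e S g ` S \<subseteq> S"
    proof (rule image_subsetI)
      fix s assume "s \<in> S"
      then obtain x where x: "x \<in> carrier P" "s = e x" using Se by auto
      have "e (g \<otimes>\<^bsub>P\<^esub> x) \<in> S" by (rule bij_betw_apply[OF e]) (use g x in simp)
      then show "cayley P e S g s \<in> S" using x cay_app[OF e x(1)] by simp
    qed
    show "S \<subseteq> cayley P e S g ` S"
    proof
      fix s assume "s \<in> S"
      then obtain y where y: "y \<in> carrier P" "s = e y" using Se by auto
      have "g \<otimes>\<^bsub>P\<^esub> (inv\<^bsub>P\<^esub> g \<otimes>\<^bsub>P\<^esub> y) = y" using g y by (simp add: m_assoc[symmetric])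
      then have "s = cayley P e S g (e (inv\<^bsub>P\<^esub> g \<otimes>\<^bsub>P\<^esub> y))" using y g cay_app[OF e] by simp
      moreover have "e (inv\<^bsub>P\<^esub> g \<otimes>\<^bsub>P\<^esub> y) \<in> S" using Se y g by auto
      ultimately show "s \<in> cayley P e S g ` S" by blast
    qed
  qed
  ultimately show ?thesis using ext by (simp add: Bij_def bij_betw_def)
qed

lemma cay_mult:
  assumes gr: "group P" and e: "bij_betw e (carrier P) S" and g: "g \<in> carrier P" and h: "h \<in> carrier P"
  shows "cayley P e S (g \<otimes>\<^bsub>P\<^esub> h) = cayley P e S g \<otimes>\<^bsub>BijGroup S\<^esub> cayley P e S h"
proof -
  interpret group P by fact
  have Se: "S = e ` carrier P" using e by (simp add: bij_betw_def)
  have "cayley P e S (g \<otimes>\<^bsub>P\<^esub> h) = compose S (cayley P e S g) (cayley P e S h)"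
  proof
    fix s show "cayley P e S (g \<otimes>\<^bsub>P\<^esub> h) s = compose S (cayley P e S g) (cayley P e S h) s"
    proof (cases "s \<in> S")
      case True
      then obtain x where x: "x \<in> carrier P" "s = e x" using Se by auto
      have ex: "e x \<in> S" by (rule bij_betw_apply[OF e x(1)])
      have ex2: "e (h \<otimes>\<^bsub>P\<^esub> x) \<in> S" by (rule bij_betw_apply[OF e]) (use h x in simp)
      show ?thesis using g h x ex ex2 by (simp add: compose_def cay_app[OF e] m_assoc)
    next
      case False then show ?thesis by (simp add: cayley_def compose_def)
    qed
  qed
  then show ?thesis using cay_Bij[OF gr e g] cay_Bij[OF gr e h] by (simp add: BijGroup_def)
qed


lemma conj_exists:
  assumes gr: "group P" and fin: "finite (carrier P)" and e: "bij_betw e (carrier P) S"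
    and Q: "subgroup Q P" and Q': "subgroup Q' P"
    and hom: "\<phi> \<in> hom (P\<lparr>carrier := Q\<rparr>) (P\<lparr>carrier := Q'\<rparr>)" and inj: "inj_on \<phi> Q"
  shows "\<exists>\<tau> \<in> carrier (BijGroup S). \<forall>q\<in>Q.
     inv\<^bsub>BijGroup S\<^esub> \<tau> \<otimes>\<^bsub>BijGroup S\<^esub> cayley P e S q \<otimes>\<^bsub>BijGroup S\<^esub> \<tau> = cayley P e S (\<phi> q)"
proof -
  let ?B = "BijGroup S"
  have phQ': "\<forall>q\<in>Q. \<phi> q \<in> Q'" using hom unfolding hom_def by auto
  have phm: "\<forall>x\<in>Q. \<forall>y\<in>Q. \<phi> (x \<otimes>\<^bsub>P\<^esub> y) = \<phi> x \<otimes>\<^bsub>P\<^esub> \<phi> y" using hom unfolding hom_def by simp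
  have Qs: "Q \<subseteq> carrier P" and Q's: "Q' \<subseteq> carrier P" using Q Q' subgroup.subset by auto
  have gh: "group_hom (P\<lparr>carrier := Q\<rparr>) P \<phi>"
    unfolding group_hom_def group_hom_axioms_def
    using subgroup.subgroup_is_group[OF Q gr] gr phQ' phm Q's by (auto simp: hom_def)
  have R: "subgroup (\<phi> ` Q) P" using group_hom.img_is_subgroup[OF gh] by simp
  obtain \<psi> where psi: "bij_betw \<psi> (carrier P) (carrier P)"
    and equi: "\<forall>q\<in>Q. \<forall>x\<in>carrier P. \<psi> (q \<otimes>\<^bsub>P\<^esub> x) = \<phi> q \<otimes>\<^bsub>P\<^esub> \<psi> x"
    using group.equiv_perm[OF gr fin Q R phm inj] by blast
  define \<sigma> where "\<sigma> = restrict (\<lambda>s. e (\<psi> (inv_into (carrier P) e s))) S"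
  have "bij_betw (e \<circ> \<psi> \<circ> inv_into (carrier P) e) S S"
    using bij_betw_trans[OF bij_betw_inv_into[OF e] bij_betw_trans[OF psi e]] by (simp add: comp_assoc)
  then have "bij_betw \<sigma> S S" unfolding \<sigma>_def by (rule bij_betw_cong[THEN iffD1, rotated]) simp
  then have sB: "\<sigma> \<in> carrier ?B" by (simp add: BijGroup_def Bij_def \<sigma>_def)
  have sapp: "\<sigma> (e x) = e (\<psi> x)" if "x \<in> carrier P" for x
  proof -
    have "e x \<in> S" by (rule bij_betw_apply[OF e that])
    moreover have "inv_into (carrier P) e (e x) = x"
      by (rule inv_into_f_f[OF bij_betw_imp_inj_on[OF e] that])
    ultimately show ?thesis by (simp add: \<sigma>_def)
  qed
  have Se: "S = e ` carrier P" using e by (simp add: bij_betw_def)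
  have comm: "\<sigma> \<otimes>\<^bsub>?B\<^esub> cayley P e S q = cayley P e S (\<phi> q) \<otimes>\<^bsub>?B\<^esub> \<sigma>" if q: "q \<in> Q" for q
  proof -
    have qc: "q \<in> carrier P" and pqc: "\<phi> q \<in> carrier P" using q Qs Q's phQ' by auto
    have "compose S \<sigma> (cayley P e S q) = compose S (cayley P e S (\<phi> q)) \<sigma>"
    proof
      fix s show "compose S \<sigma> (cayley P e S q) s = compose S (cayley P e S (\<phi> q)) \<sigma> s"
      proof (cases "s \<in> S")
        case True
        then obtain x where x: "x \<in> carrier P" "s = e x" using Se by auto
        have px: "\<psi> x \<in> carrier P" by (rule bij_betw_apply[OF psi x(1)])
        have qx: "q \<otimes>\<^bsub>P\<^esub> x \<in> carrier P" using qc x(1) gr by (simp add: group.is_monoid monoid.m_closed)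
        have "compose S \<sigma> (cayley P e S q) s = e (\<psi> (q \<otimes>\<^bsub>P\<^esub> x))"
          using True x cay_app[OF e x(1)] sapp[OF qx] by (simp add: compose_def)
        also have "\<dots> = e (\<phi> q \<otimes>\<^bsub>P\<^esub> \<psi> x)" using equi q x(1) by simp
        also have "\<dots> = compose S (cayley P e S (\<phi> q)) \<sigma> s"
          using True x sapp[OF x(1)] cay_app[OF e px] by (simp add: compose_def)
        finally show ?thesis .
      next
        case False then show ?thesis by (simp add: compose_def)
      qed
    qed
    then show ?thesis using sB cay_Bij[OF gr e qc] cay_Bij[OF gr e pqc] by (simp add: BijGroup_def)
  qed
  interpret B: group ?B by (rule group_BijGroup)
  have "\<forall>q\<in>Q. inv\<^bsub>?B\<^esub> (inv\<^bsub>?B\<^esub> \<sigma>) \<otimes>\<^bsub>?B\<^esub> cayley P e S q \<otimes>\<^bsub>?B\<^esub> inv\<^bsub>?B\<^esub> \<sigma> = cayley P e S (\<phi> q)"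
  proof
    fix q assume q: "q \<in> Q"
    have qc: "q \<in> carrier P" and pqc: "\<phi> q \<in> carrier P" using q Qs Q's phQ' by auto
    have c1: "cayley P e S q \<in> carrier ?B" and c2: "cayley P e S (\<phi> q) \<in> carrier ?B"
      using cay_Bij[OF gr e qc] cay_Bij[OF gr e pqc] by (simp_all add: BijGroup_def)
    have "inv\<^bsub>?B\<^esub> (inv\<^bsub>?B\<^esub> \<sigma>) \<otimes>\<^bsub>?B\<^esub> cayley P e S q \<otimes>\<^bsub>?B\<^esub> inv\<^bsub>?B\<^esub> \<sigma>
        = cayley P e S (\<phi> q) \<otimes>\<^bsub>?B\<^esub> \<sigma> \<otimes>\<^bsub>?B\<^esub> inv\<^bsub>?B\<^esub> \<sigma>"
      using comm[OF q] sB by simp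
    also have "\<dots> = cayley P e S (\<phi> q)" using sB c2 by (simp add: B.m_assoc)
    finally show "inv\<^bsub>?B\<^esub> (inv\<^bsub>?B\<^esub> \<sigma>) \<otimes>\<^bsub>?B\<^esub> cayley P e S q \<otimes>\<^bsub>?B\<^esub> inv\<^bsub>?B\<^esub> \<sigma> = cayley P e S (\<phi> q)" .
  qed
  then show ?thesis using sB by blast
qed


theorem theorem3:
  fixes P :: "('g, 'b) monoid_scheme" and p :: nat and S :: "'a set" and e :: "'g \<Rightarrow> 'a"
  assumes "Factorial_Ring.prime p"
    and "group P" and "finite (carrier P)" and "\<exists>k. order P = p ^ k"
    and "bij_betw e (carrier P) S"
  shows "\<forall>n. induced p n P (cayley P e S) (BijGroup S) ` Hcoh (BijGroup S) p n \<subseteq> I_Cu P p n"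
proof (intro allI subsetI)
  fix n z
  assume "z \<in> induced p n P (cayley P e S) (BijGroup S) ` Hcoh (BijGroup S) p n"
  then obtain f where fc: "is_cocycle (BijGroup S) p n f"
    and z: "z = induced p n P (cayley P e S) (BijGroup S) (cohom_class (BijGroup S) p n f)"
    unfolding Hcoh_def by blast
  let ?B = "BijGroup S" and ?c = "cayley P e S"
  have gr: "group P" and fin: "finite (carrier P)" and e: "bij_betw e (carrier P) S" using assms by auto
  have ccar: "\<And>x. x \<in> carrier P \<Longrightarrow> ?c x \<in> carrier ?B"
    using cay_Bij[OF gr e] by (simp add: BijGroup_def)
  have cmul: "\<And>x y. x \<in> carrier P \<Longrightarrow> y \<in> carrier P \<Longrightarrow> ?c (x \<otimes>\<^bsub>P\<^esub> y) = ?c x \<otimes>\<^bsub>?B\<^esub> ?c y"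
    using cay_mult[OF gr e] by blast
  define f1 where "f1 = (\<lambda>ks. f (map ?c ks))"
  have z1: "z = cohom_class P p n f1" unfolding z f1_def by (rule induced_class[OF fc ccar cmul])
  have f1c: "is_cocycle P p n f1" unfolding f1_def by (rule cocycle_pull[OF fc ccar cmul])
  have "z \<in> Hcoh P p n" using z1 f1c unfolding Hcoh_def by blast
  moreover have "induced p n (P\<lparr>carrier := Q\<rparr>) \<phi> (P\<lparr>carrier := Q'\<rparr>) (Res p n P Q' z) = Res p n P Q z"
    if Q: "subgroup Q P" and Q': "subgroup Q' P"
      and hom: "\<phi> \<in> hom (P\<lparr>carrier := Q\<rparr>) (P\<lparr>carrier := Q'\<rparr>)" and inj: "inj_on \<phi> Q" for Q Q' \<phi>
  proof -
    have Qs: "Q \<subseteq> carrier P" and Q's: "Q' \<subseteq> carrier P" using Q Q' subgroup.subset by auto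
    have phQ': "\<forall>q\<in>Q. \<phi> q \<in> Q'" using hom unfolding hom_def by auto
    have phm: "\<forall>x\<in>Q. \<forall>y\<in>Q. \<phi> (x \<otimes>\<^bsub>P\<^esub> y) = \<phi> x \<otimes>\<^bsub>P\<^esub> \<phi> y" using hom unfolding hom_def by simp
    have r1: "Res p n P Q' z = cohom_class (P\<lparr>carrier := Q'\<rparr>) p n (\<lambda>ks. f1 (map id ks))"
      unfolding Res_def z1 by (rule induced_class[OF f1c]) (use Q's in auto)
    have f2c: "is_cocycle (P\<lparr>carrier := Q'\<rparr>) p n (\<lambda>ks. f1 (map id ks))"
      by (rule cocycle_pull[OF f1c]) (use Q's in auto)
    have r2: "induced p n (P\<lparr>carrier := Q\<rparr>) \<phi> (P\<lparr>carrier := Q'\<rparr>) (Res p n P Q' z)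
        = cohom_class (P\<lparr>carrier := Q\<rparr>) p n (\<lambda>ks. f1 (map id (map \<phi> ks)))"
      unfolding r1 by (rule induced_class[OF f2c]) (use phQ' phm in auto)
    have r3: "Res p n P Q z = cohom_class (P\<lparr>carrier := Q\<rparr>) p n (\<lambda>ks. f1 (map id ks))"
      unfolding Res_def z1 by (rule induced_class[OF f1c]) (use Qs in auto)
    obtain \<tau> where \<tau>: "\<tau> \<in> carrier ?B" and conj: "\<forall>q\<in>Q.
       inv\<^bsub>?B\<^esub> \<tau> \<otimes>\<^bsub>?B\<^esub> ?c q \<otimes>\<^bsub>?B\<^esub> \<tau> = ?c (\<phi> q)"
      using conj_exists[OF gr fin e Q Q' hom inj] by blast
    let ?cj = "\<lambda>g. inv\<^bsub>?B\<^esub> \<tau> \<otimes>\<^bsub>?B\<^esub> g \<otimes>\<^bsub>?B\<^esub> \<tau>"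
    have b1: "is_coboundary ?B p n (\<lambda>gs. f (map ?cj gs) - f gs)"
      by (rule group.conj_B[OF group_BijGroup fc \<tau>])
    have b2: "is_coboundary (P\<lparr>carrier := Q\<rparr>) p n (\<lambda>ks. f (map ?cj (map ?c ks)) - f (map ?c ks))"
      using B_pull[OF b1, of "P\<lparr>carrier := Q\<rparr>" ?c] ccar cmul Qs by auto
    have b3: "is_coboundary (P\<lparr>carrier := Q\<rparr>) p n (\<lambda>ks. f1 (map id (map \<phi> ks)) - f1 (map id ks))"
    proof (rule B_cong[OF b2], intro ballI)
      fix ks assume "ks \<in> tuples (P\<lparr>carrier := Q\<rparr>) n"
      then have "set ks \<subseteq> Q" by (simp add: tuples_def)
      then have eq: "map ?cj (map ?c ks) = map ?c (map \<phi> ks)" using conj by auto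
      show "(f (map ?cj (map ?c ks)) - f (map ?c ks) - (f1 (map id (map \<phi> ks)) - f1 (map id ks))) mod int p = 0"
        by (simp del: map_map add: eq f1_def)
    qed
    show ?thesis unfolding r2 r3 by (rule class_eq[OF b3])
  qed
  ultimately show "z \<in> I_Cu P p n" unfolding I_Cu_def by blast
qed

end
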